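(* The following statements are equivalent for $(X,\tau,\mathcal{P})$: (1) $(X,\tau,\mathcal{P})$ is an almost $\mathcal{P}P$-space; (2) every $z$-ideal of $C(X)_\mathcal{P}$ is a $z^0$-ideal; (3) every maximal ideal of $C(X)_\mathcal{P}$ is a $z^0$-ideal; (4) every maximal ideal of $C(X)_\mathcal{P}$ consists entirely of zero divisors; (5) the sum of any two ideals of $C(X)_\mathcal{P}$ consisting of zero divisors is either $C(X)_\mathcal{P}$ or consists of zero divisors; (6) for each non-unit $f\in C(X)_\mathcal{P}$ there exists a nonzero $g\in C(X)_\mathcal{P}$ with $P(f)\subseteq Ann(g)$.
   Context: Let $(X,\tau)$ be a $T_1$ topological space and $\mathcal{P}$ an ideal of closed subsets of $X$ (a nonempty family of closed sets closed under finite unions and under taking closed subsets). For $f\colon X\to\mathbb{R}$, $D_f$ denotes the set of points of discontinuity of $f$, and $C(X)_\mathcal{P}=\{f\colon X\to\mathbb{R} : \overline{D_f}\in\mathcal{P}\}$, a commutative ring with unity under pointwise operations. For $f\in C(X)_\mathcal{P}$, $Z_\mathcal{P}(f)=\{x: f(x)=0\}$, $coz(f)=X\setminus Z_\mathcal{P}(f)$; $X_\mathcal{P}$ is $X$ with the topology having base $\{coz(f): f\in C(X)_\mathcal{P}\}$, $int_{X_\mathcal{P}}$ its interior operator. $(X,\tau,\mathcal{P})$ is an almost $\mathcal{P}P$-space if for every $f\in C(X)_\mathcal{P}$ with $Z_\mathcal{P}(f)\neq\emptyset$ one has $int_{X_\mathcal{P}}(Z_\mathcal{P}(f))\neq\emptyset$.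 $Ann(g)=\{h: hg=0\}$. In a commutative ring $R$ with unity, $M(a)$ (resp. $P(a)$) is the intersection of all maximal (resp. minimal prime) ideals containing $a$; an ideal $I$ is a $z$-ideal if $a\in I\Rightarrow M(a)\subseteq I$, and a $z^0$-ideal if $a\in I\Rightarrow P(a)\subseteq I$. *)

theory Defs
  imports "HOL-Analysis.Analysis" "HOL-Algebra.Ideal" "HOL-Algebra.AbelCoset"
begin

definition cont_at :: "'a topology \<Rightarrow> ('a \<Rightarrow> real) \<Rightarrow> 'a \<Rightarrow> bool" where
  "cont_at X f x \<longleftrightarrow> (\<forall>V. open V \<and> f x \<in> V \<longrightarrow> (\<exists>U. openin X U \<and> x \<in> U \<and> f ` U \<subseteq> V))"

definition discont :: "'a topology \<Rightarrow> ('a \<Rightarrow> real) \<Rightarrow> 'a set" where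
  "discont X f = {x \<in> topspace X. \<not> cont_at X f x}"

definition closed_ideal :: "'a topology \<Rightarrow> 'a set set \<Rightarrow> bool" where
  "closed_ideal X P \<longleftrightarrow> P \<noteq> {} \<and> (\<forall>A\<in>P. closedin X A)
     \<and> (\<forall>A\<in>P. \<forall>B\<in>P. A \<union> B \<in> P)
     \<and> (\<forall>A\<in>P. \<forall>B. closedin X B \<and> B \<subseteq> A \<longrightarrow> B \<in> P)"

(* The ring C(X)_P: functions X -> R (represented extensionally, value 0 outside X)
   with closure of D_f in P, pointwise operations *)
definition CP :: "'a topology \<Rightarrow> 'a set set \<Rightarrow> ('a \<Rightarrow> real) ring" where
  "CP X P = \<lparr> carrier = {f. (\<forall>x. x \<notin> topspace X \<longrightarrow> f x = 0) \<and> X closure_of (discont X f) \<in> P},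
              mult = (\<lambda>f g x. f x * g x),
              one = (\<lambda>x. if x \<in> topspace X then 1 else 0),
              zero = (\<lambda>x. 0),
              add = (\<lambda>f g x. f x + g x) \<rparr>"

definition Zset :: "'a topology \<Rightarrow> ('a \<Rightarrow> real) \<Rightarrow> 'a set" where
  "Zset X f = {x \<in> topspace X. f x = 0}"

definition coz :: "'a topology \<Rightarrow> ('a \<Rightarrow> real) \<Rightarrow> 'a set" where
  "coz X f = {x \<in> topspace X. f x \<noteq> 0}"

definition XP :: "'a topology \<Rightarrow> 'a set set \<Rightarrow> 'a topology" where
  "XP X P = topology_generated_by {coz X f | f. f \<in> carrier (CP X P)}"

definition almost_PP :: "'a topology \<Rightarrow> 'a set set \<Rightarrow> bool" where
  "almost_PP X P \<longleftrightarrow> (\<forall>f \<in> carrier (CP X P). Zset X f \<noteq> {} \<longrightarrow> (XP X P) interior_of (Zset X f) \<noteq> {})"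

definition minimal_prime :: "('b, 'c) ring_scheme \<Rightarrow> 'b set \<Rightarrow> bool" where
  "minimal_prime R I \<longleftrightarrow> primeideal I R \<and> (\<forall>J. primeideal J R \<and> J \<subseteq> I \<longrightarrow> J = I)"

(* M(a): intersection of all maximal ideals containing a (the whole ring if none) *)
definition Mset :: "('b, 'c) ring_scheme \<Rightarrow> 'b \<Rightarrow> 'b set" where
  "Mset R a = carrier R \<inter> \<Inter>{I. maximalideal I R \<and> a \<in> I}"

(* P(a): intersection of all minimal prime ideals containing a (the whole ring if none) *)
definition Pset :: "('b, 'c) ring_scheme \<Rightarrow> 'b \<Rightarrow> 'b set" where
  "Pset R a = carrier R \<inter> \<Inter>{I. minimal_prime R I \<and> a \<in> I}"

definition z_ideal :: "('b, 'c) ring_scheme \<Rightarrow> 'b set \<Rightarrow> bool" where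
  "z_ideal R I \<longleftrightarrow> ideal I R \<and> (\<forall>a\<in>I. Mset R a \<subseteq> I)"

definition z0_ideal :: "('b, 'c) ring_scheme \<Rightarrow> 'b set \<Rightarrow> bool" where
  "z0_ideal R I \<longleftrightarrow> ideal I R \<and> (\<forall>a\<in>I. Pset R a \<subseteq> I)"

definition zero_divisors :: "('b, 'c) ring_scheme \<Rightarrow> 'b set" where
  "zero_divisors R = {a \<in> carrier R. \<exists>b \<in> carrier R. b \<noteq> \<zero>\<^bsub>R\<^esub> \<and> a \<otimes>\<^bsub>R\<^esub> b = \<zero>\<^bsub>R\<^esub>}"

definition Ann :: "('b, 'c) ring_scheme \<Rightarrow> 'b \<Rightarrow> 'b set" where
  "Ann R g = {h \<in> carrier R. h \<otimes>\<^bsub>R\<^esub> g = \<zero>\<^bsub>R\<^esub>}"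

end

theory Submission
  imports Defs "HOL-Algebra.Ring_Divisibility"
begin

lemma (in cring) prime_avoiding:
  assumes S: "S \<subseteq> carrier R" "\<one> \<in> S" "\<And>a b. a \<in> S \<Longrightarrow> b \<in> S \<Longrightarrow> a \<otimes> b \<in> S" "\<zero> \<notin> S"
  shows "\<exists>p. primeideal p R \<and> p \<inter> S = {}"
proof -
  let ?A = "{I. ideal I R \<and> I \<inter> S = {}}"
  have "\<exists>M\<in>?A. \<forall>X\<in>?A. M \<subseteq> X \<longrightarrow> X = M"
  proof (rule subset_Zorn)
    fix C assume C: "subset.chain ?A C"
    have C': "subset.chain {I. ideal I R} C" using C by (auto simp: subset_chain_def)
    let ?U = "if C = {} then {\<zero>} else \<Union>C"
    have "ideal ?U R" by (rule chain_Union_is_ideal[OF C'])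
    moreover have "?U \<inter> S = {}" using C S(4) by (auto simp: subset_chain_def)
    ultimately show "\<exists>U\<in>?A. \<forall>X\<in>C. X \<subseteq> U" by (intro bexI[of _ ?U]) auto
  qed
  then obtain M where M: "ideal M R" "M \<inter> S = {}"
    and Mmax: "\<And>X. ideal X R \<Longrightarrow> X \<inter> S = {} \<Longrightarrow> M \<subseteq> X \<Longrightarrow> X = M" by auto
  interpret M: ideal M R by (rule M(1))
  have key: "\<exists>m\<in>M. \<exists>r\<in>carrier R. m \<oplus> r \<otimes> a \<in> S" if a: "a \<in> carrier R" "a \<notin> M" for a
  proof -
    let ?J = "M <+>\<^bsub>R\<^esub> PIdl a"
    have J: "ideal ?J R" by (rule add_ideals[OF M(1) cgenideal_ideal[OF a(1)]])
    have "M \<subseteq> ?J"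
    proof
      fix m assume "m \<in> M"
      then have "m = m \<oplus> \<zero> \<otimes> a" "\<zero> \<otimes> a \<in> PIdl a" using a M.Icarr
        by (auto simp: cgenideal_def intro!: exI[of _ \<zero>])
      then show "m \<in> ?J" using \<open>m \<in> M\<close> by (auto simp: set_add_defs) 
    qed
    moreover have "a \<in> ?J"
    proof -
      have "a = \<zero> \<oplus> \<one> \<otimes> a" "\<one> \<otimes> a \<in> PIdl a" using a by (auto simp: cgenideal_def intro!: exI[of _ \<one>])
      moreover have "\<zero> \<in> M" by (rule additive_subgroup.zero_closed[OF M.is_additive_subgroup])
      ultimately show ?thesis unfolding set_add_def' by blast
    qed
    ultimately have "?J \<inter> S \<noteq> {}" using Mmax[OF J] a by blast
    then show ?thesis by (auto simp: set_add_defs cgenideal_def)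
  qed
  have prime: "primeideal M R"
  proof (rule primeidealI[OF M(1) is_cring])
    show "carrier R \<noteq> M" using S(2) M(2) by auto
    fix a b assume ab: "a \<in> carrier R" "b \<in> carrier R" "a \<otimes> b \<in> M"
    show "a \<in> M \<or> b \<in> M"
    proof (rule ccontr)
      assume nab: "\<not> (a \<in> M \<or> b \<in> M)"
      obtain m1 r1 where m1: "m1 \<in> M" "r1 \<in> carrier R" "m1 \<oplus> r1 \<otimes> a \<in> S"
        using key[OF ab(1)] nab by blast
      obtain m2 r2 where m2: "m2 \<in> M" "r2 \<in> carrier R" "m2 \<oplus> r2 \<otimes> b \<in> S"
        using key[OF ab(2)] nab by blast
      note m = m1 m2
      have c: "m1 \<in> carrier R" "m2 \<in> carrier R" using m M.Icarr by auto
      have "(m1 \<oplus> r1 \<otimes> a) \<otimes> (m2 \<oplus> r2 \<otimes> b) = m1 \<otimes> (m2 \<oplus> r2 \<otimes> b) \<oplus> ((r1 \<otimes> a) \<otimes> m2 \<oplus> (r1 \<otimes> r2) \<otimes> (a \<otimes> b))"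
        using m c ab by (simp add: l_distr r_distr m_assoc m_lcomm a_ac)
      also have "\<dots> \<in> M"
      proof -
        have "m1 \<otimes> (m2 \<oplus> r2 \<otimes> b) \<in> M" using M.I_r_closed[OF m(1), of "m2 \<oplus> r2 \<otimes> b"] m ab by auto
        moreover have "(r1 \<otimes> a) \<otimes> m2 \<in> M" using M.I_l_closed[OF m(4), of "r1 \<otimes> a"] m ab by auto
        moreover have "(r1 \<otimes> r2) \<otimes> (a \<otimes> b) \<in> M" using M.I_l_closed[OF ab(3), of "r1 \<otimes> r2"] m ab by auto
        ultimately show ?thesis by (intro M.a_closed)
      qed
      finally show False using S(3)[OF m(3) m(6)] M(2) by blast
    qed
  qed
  show ?thesis using prime M(2) by blast
qed



lemma (in cring) exists_minimal_prime:
  assumes p: "primeideal p R"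
  shows "\<exists>q. minimal_prime R q \<and> q \<subseteq> p"
proof -
  let ?A = "{q. primeideal q R \<and> q \<subseteq> p}"
  let ?P = "\<lambda>a b. b \<subseteq> a"
  have "\<exists>m\<in>?A. \<forall>a\<in>?A. ?P m a \<longrightarrow> a = m"
  proof (rule predicate_Zorn)
    show "partial_order_on ?A (relation_of ?P ?A)"
      by (rule partial_order_on_relation_ofI) auto
    fix C assume C: "C \<in> Chains (relation_of ?P ?A)"
    have CA: "C \<subseteq> ?A" using C unfolding Chains_def relation_of_def by auto
    have Cc: "\<And>a b. a \<in> C \<Longrightarrow> b \<in> C \<Longrightarrow> a \<subseteq> b \<or> b \<subseteq> a"
      using C unfolding Chains_def relation_of_def by auto
    show "\<exists>u\<in>?A. \<forall>a\<in>C. ?P a u"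
    proof (cases "C = {}")
      case True then show ?thesis using p by auto
    next
      case False
      have id: "ideal (\<Inter>C) R"
        using CA False by (intro i_Intersect) (auto dest: primeideal.axioms(1))
      have pr: "primeideal (\<Inter>C) R"
      proof (rule primeidealI[OF id is_cring])
        obtain q where q: "q \<in> C" using False by auto
        then have "\<one> \<notin> q" using CA 
          by (metis (no_types, lifting) ideal.one_imp_carrier mem_Collect_eq primeideal.I_notcarr primeideal.axioms(1) subsetD)
        then show "carrier R \<noteq> \<Inter>C" using q by auto
        fix a b assume ab: "a \<in> carrier R" "b \<in> carrier R" "a \<otimes> b \<in> \<Inter>C"
        show "a \<in> \<Inter>C \<or> b \<in> \<Inter>C"
        proof (rule ccontr)
          assume "\<not> (a \<in> \<Inter>C \<or> b \<in> \<Inter>C)"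
          then obtain q1 q2 where q: "q1 \<in> C" "a \<notin> q1" "q2 \<in> C" "b \<notin> q2" by auto
          have "primeideal q1 R" "primeideal q2 R" using q CA by auto
          then have "a \<in> q1 \<or> b \<in> q1" "a \<in> q2 \<or> b \<in> q2"
            using q ab by (meson InterD primeideal.I_prime)+
          then show False using q Cc[OF q(1) q(3)] by auto
        qed
      qed
      have "\<Inter>C \<subseteq> p" using CA False by auto
      then show ?thesis using pr by (intro bexI[of _ "\<Inter>C"]) auto
    qed
  qed
  then obtain m where m: "primeideal m R" "m \<subseteq> p" and mm: "\<And>a. primeideal a R \<Longrightarrow> a \<subseteq> p \<Longrightarrow> a \<subseteq> m \<Longrightarrow> a = m"
    by auto
  have "minimal_prime R m" unfolding minimal_prime_def using m mm by blast
  then show ?thesis using m by blast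
qed


lemma (in cring) minimal_prime_ann:
  assumes q: "minimal_prime R q" and a: "a \<in> q"
  shows "\<exists>c\<in>carrier R. c \<notin> q \<and> (\<exists>n::nat. c \<otimes> a [^] n = \<zero>)"
proof (rule ccontr)
  assume H: "\<not> (\<exists>c\<in>carrier R. c \<notin> q \<and> (\<exists>n::nat. c \<otimes> a [^] n = \<zero>))"
  have pq: "primeideal q R" using q by (simp add: minimal_prime_def)
  interpret Q: primeideal q R by (rule pq)
  have aC: "a \<in> carrier R" using a Q.Icarr by blast
  have one: "\<one> \<notin> q" using Q.one_imp_carrier Q.I_notcarr by auto
  let ?S = "{c \<otimes> a [^] (n::nat) | c n. c \<in> carrier R \<and> c \<notin> q}"
  have "\<exists>p. primeideal p R \<and> p \<inter> ?S = {}"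
  proof (rule prime_avoiding)
    show "?S \<subseteq> carrier R" using aC by auto
    have "\<one> = \<one> \<otimes> a [^] (0::nat)" by simp
    then show "\<one> \<in> ?S" using one by blast
    show "\<zero> \<notin> ?S"
    proof
      assume "\<zero> \<in> ?S"
      then obtain c n where "\<zero> = c \<otimes> a [^] (n::nat)" "c \<in> carrier R" "c \<notin> q" by blast
      then show False using H by metis
    qed
    fix x y assume "x \<in> ?S" "y \<in> ?S"
    then obtain c n d m where cd: "x = c \<otimes> a [^] (n::nat)" "c \<in> carrier R" "c \<notin> q"
      "y = d \<otimes> a [^] (m::nat)" "d \<in> carrier R" "d \<notin> q" by blast
    have "x \<otimes> y = (c \<otimes> d) \<otimes> a [^] (n + m)"
      using cd aC by (simp add: nat_pow_mult[symmetric] m_assoc m_lcomm)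
    moreover have "c \<otimes> d \<notin> q" using Q.I_prime[OF cd(2) cd(5)] cd by blast
    moreover have "c \<otimes> d \<in> carrier R" using cd by simp
    ultimately show "x \<otimes> y \<in> ?S" by blast
  qed
  then obtain p where p: "primeideal p R" "p \<inter> ?S = {}" by blast
  have "p \<subseteq> q"
  proof
    fix x assume x: "x \<in> p"
    have xC: "x \<in> carrier R" using ideal.Icarr[OF primeideal.axioms(1)[OF p(1)] x] .
    show "x \<in> q"
    proof (rule ccontr)
      assume "x \<notin> q"
      moreover have "x = x \<otimes> a [^] (0::nat)" using xC by simp
      ultimately have "x \<in> ?S" using xC by blast
      then show False using x p(2) by blast
    qed
  qed
  then have "p = q" using q p(1) by (auto simp: minimal_prime_def)
  moreover have "a = \<one> \<otimes> a [^] (1::nat)" using aC by simp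
  then have "a \<in> ?S" using one by blast
  ultimately show False using a p(2) by blast
qed

lemma (in cring) Pset_ann:
  assumes red: "\<And>s n. s \<in> carrier R \<Longrightarrow> s [^] (n::nat) = \<zero> \<Longrightarrow> s = \<zero>"
    and C: "a \<in> carrier R" "b \<in> carrier R" "h \<in> carrier R"
    and ha: "h \<otimes> a = \<zero>" and b: "b \<in> Pset R a"
  shows "h \<otimes> b = \<zero>"
proof (rule ccontr)
  assume s: "h \<otimes> b \<noteq> \<zero>"
  let ?s = "h \<otimes> b"
  have sC: "?s \<in> carrier R" using C by simp
  let ?S = "{?s [^] (n::nat) | n. True}"
  have "\<exists>p. primeideal p R \<and> p \<inter> ?S = {}"
  proof (rule prime_avoiding)
    show "?S \<subseteq> carrier R" using sC by auto
    have "\<one> = ?s [^] (0::nat)" by simp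
    then show "\<one> \<in> ?S" by blast
    show "\<zero> \<notin> ?S"
    proof
      assume "\<zero> \<in> ?S"
      then obtain n where "\<zero> = ?s [^] (n::nat)" by blast
      then show False using red[OF sC, of n] s by simp
    qed
    fix x y assume "x \<in> ?S" "y \<in> ?S"
    then obtain n m where "x = ?s [^] (n::nat)" "y = ?s [^] (m::nat)" by blast
    then have "x \<otimes> y = ?s [^] (n + m)" using sC by (simp add: nat_pow_mult)
    then show "x \<otimes> y \<in> ?S" by blast
  qed
  then obtain p where p: "primeideal p R" "p \<inter> ?S = {}" by blast
  obtain q where q: "minimal_prime R q" "q \<subseteq> p" using exists_minimal_prime[OF p(1)] by blast
  have pq: "primeideal q R" using q by (simp add: minimal_prime_def)
  interpret Q: primeideal q R by (rule pq)
  have "?s = ?s [^] (1::nat)" using sC by simp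
  then have "?s \<in> ?S" by blast
  then have sq: "?s \<notin> q" using p(2) q(2) by blast
  have hq: "h \<notin> q" using Q.I_r_closed[of h b] C sq by blast
  have bq: "b \<notin> q" using Q.I_l_closed[of b h] C sq by blast
  have "h \<otimes> a \<in> q" using ha Q.additive_subgroup_axioms additive_subgroup.zero_closed by auto
  then have "a \<in> q" using hq Q.I_prime[OF C(3) C(1)] by blast
  then have "b \<in> q" using b q(1) by (auto simp: Pset_def)
  then show False using bq by blast
qed



lemma cont_at_iff:
  assumes "x \<in> topspace X"
  shows "cont_at X f x \<longleftrightarrow> (f \<longlongrightarrow> f x) (nhdsin X x)"
  using assms unfolding cont_at_def tendsto_def eventually_nhdsin by (auto simp: image_subset_iff)

lemma discont_by: assumes "\<And>x. x \<in> topspace X \<Longrightarrow> cont_at X f x \<Longrightarrow> cont_at X g x \<Longrightarrow> cont_at X h x"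
  shows "discont X h \<subseteq> discont X f \<union> discont X g"
  using assms unfolding discont_def by blast

lemma discont_add: "discont X (\<lambda>z. f z + g z) \<subseteq> discont X f \<union> discont X g"
  by (rule discont_by) (simp add: cont_at_iff tendsto_add)

lemma discont_mult: "discont X (\<lambda>z. f z * g z) \<subseteq> discont X f \<union> discont X g"
  by (rule discont_by) (simp add: cont_at_iff tendsto_mult)

lemma discont_comp:
  assumes "continuous_on UNIV \<phi>"
  shows "discont X (\<lambda>z. \<phi> (f z)) \<subseteq> discont X f"
proof -
  have c: "isCont \<phi> y" for y using assms by (simp add: continuous_on_eq_continuous_at)
  have "discont X (\<lambda>z. \<phi> (f z)) \<subseteq> discont X f \<union> discont X f"
    by (rule discont_by) (simp add: cont_at_iff isCont_tendsto_compose[OF c])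
  then show ?thesis by simp
qed

lemma discont_inverse:
  assumes "\<And>x. x \<in> topspace X \<Longrightarrow> f x \<noteq> 0"
  shows "discont X (\<lambda>z. inverse (f z)) \<subseteq> discont X f"
proof -
  have "discont X (\<lambda>z. inverse (f z)) \<subseteq> discont X f \<union> discont X f"
    by (rule discont_by) (simp add: cont_at_iff tendsto_inverse assms)
  then show ?thesis by simp
qed

lemma discont_if: "discont X (\<lambda>z. if z \<in> topspace X then h z else 0) = discont X h"
proof -
  let ?F = "\<lambda>z. if z \<in> topspace X then h z else 0"
  have eq: "\<And>U. openin X U \<Longrightarrow> ?F ` U = h ` U"
    by (rule image_cong) (auto dest: openin_subset)
  have "cont_at X ?F x = cont_at X h x" if x: "x \<in> topspace X" for x
  proof -
    have Fx: "?F x = h x" using x by simp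
    have "\<And>V. (\<exists>U. openin X U \<and> x \<in> U \<and> ?F ` U \<subseteq> V) = (\<exists>U. openin X U \<and> x \<in> U \<and> h ` U \<subseteq> V)"
      by (intro ex_cong1 conj_cong refl) (simp_all only: eq)
    then show ?thesis unfolding cont_at_def Fx by presburger
  qed
  then show ?thesis unfolding discont_def by auto
qed

lemma discont_const: "discont X (\<lambda>z. c) = {}"
  unfolding discont_def cont_at_def by (auto intro!: exI[of _ "topspace X"])

lemma CP_carrier: "f \<in> carrier (CP X P) \<longleftrightarrow> (\<forall>x. x \<notin> topspace X \<longrightarrow> f x = 0) \<and> X closure_of discont X f \<in> P"
  by (simp add: CP_def)

lemma CP_mult[simp]: "f \<otimes>\<^bsub>CP X P\<^esub> g = (\<lambda>z. f z * g z)" by (simp add: CP_def)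
lemma CP_add[simp]: "f \<oplus>\<^bsub>CP X P\<^esub> g = (\<lambda>z. f z + g z)" by (simp add: CP_def)
lemma CP_one[simp]: "\<one>\<^bsub>CP X P\<^esub> = (\<lambda>x. if x \<in> topspace X then 1 else 0)" by (simp add: CP_def)
lemma CP_zero[simp]: "\<zero>\<^bsub>CP X P\<^esub> = (\<lambda>x. 0)" by (simp add: CP_def)

lemma CP_out: "f \<in> carrier (CP X P) \<Longrightarrow> x \<notin> topspace X \<Longrightarrow> f x = 0"
  by (simp add: CP_def)

lemma ci_sub: "closed_ideal X P \<Longrightarrow> A \<in> P \<Longrightarrow> closedin X B \<Longrightarrow> B \<subseteq> A \<Longrightarrow> B \<in> P"
  unfolding closed_ideal_def by meson

lemma ci_un: "closed_ideal X P \<Longrightarrow> A \<in> P \<Longrightarrow> B \<in> P \<Longrightarrow> A \<union> B \<in> P"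
  unfolding closed_ideal_def by meson

lemma ci_ne: "closed_ideal X P \<Longrightarrow> \<exists>A. A \<in> P"
  unfolding closed_ideal_def by (metis all_not_in_conv)

lemma closed_sub:
  assumes cP: "closed_ideal X P" and f: "f \<in> carrier (CP X P)" and g: "g \<in> carrier (CP X P)"
    and h: "discont X h \<subseteq> discont X f \<union> discont X g"
  shows "X closure_of discont X h \<in> P"
proof -
  have "X closure_of discont X f \<in> P" "X closure_of discont X g \<in> P" using f g by (simp_all add: CP_carrier)
  then have A: "X closure_of discont X f \<union> X closure_of discont X g \<in> P" by (rule ci_un[OF cP])
  have "X closure_of discont X h \<subseteq> X closure_of discont X f \<union> X closure_of discont X g"
    using closure_of_mono[OF h] by (simp add: closure_of_Un)
  moreover have "closedin X (X closure_of discont X h)" by simp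
  ultimately show ?thesis using ci_sub[OF cP A] by blast
qed

lemma empty_in_P: assumes cP: "closed_ideal X P" shows "{} \<in> P"
proof -
  obtain A where A: "A \<in> P" using ci_ne[OF cP] by blast
  show ?thesis using ci_sub[OF cP A closedin_empty empty_subsetI] .
qed

lemma CP_add_closed: assumes cP: "closed_ideal X P" and f: "f \<in> carrier (CP X P)" and g: "g \<in> carrier (CP X P)"
  shows "(\<lambda>z. f z + g z) \<in> carrier (CP X P)"
  unfolding CP_carrier using CP_out[OF f] CP_out[OF g] closed_sub[OF cP f g discont_add] by simp

lemma CP_mult_closed: assumes cP: "closed_ideal X P" and f: "f \<in> carrier (CP X P)" and g: "g \<in> carrier (CP X P)"
  shows "(\<lambda>z. f z * g z) \<in> carrier (CP X P)"
  unfolding CP_carrier using CP_out[OF f] CP_out[OF g] closed_sub[OF cP f g discont_mult] by simp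

lemma comp_closed: assumes cP: "closed_ideal X P" and f: "f \<in> carrier (CP X P)" and c: "continuous_on UNIV \<phi>" and z: "\<phi> 0 = 0"
  shows "(\<lambda>z. \<phi> (f z)) \<in> carrier (CP X P)"
proof -
  have "discont X (\<lambda>z. \<phi> (f z)) \<subseteq> discont X f \<union> discont X f" using discont_comp[OF c] by simp
  then show ?thesis unfolding CP_carrier using CP_out[OF f] closed_sub[OF cP f f] z by simp
qed

lemma compif_closed: assumes cP: "closed_ideal X P" and f: "f \<in> carrier (CP X P)" and c: "continuous_on UNIV \<phi>"
  shows "(\<lambda>z. if z \<in> topspace X then \<phi> (f z) else 0) \<in> carrier (CP X P)"
proof -
  have "discont X (\<lambda>z. if z \<in> topspace X then \<phi> (f z) else 0) \<subseteq> discont X f \<union> discont X f"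
    using discont_comp[OF c] by (simp add: discont_if)
  then show ?thesis unfolding CP_carrier using closed_sub[OF cP f f] by simp
qed

lemma CP_zero_closed: assumes "closed_ideal X P" shows "(\<lambda>z. 0) \<in> carrier (CP X P)"
  unfolding CP_carrier discont_const using empty_in_P[OF assms] by simp

lemma CP_one_closed: assumes cP: "closed_ideal X P" shows "(\<lambda>x. if x \<in> topspace X then 1 else 0) \<in> carrier (CP X P)"
  using compif_closed[OF cP CP_zero_closed[OF cP], of "\<lambda>_. 1"] by simp

lemma inverse_closed: assumes cP: "closed_ideal X P" and f: "f \<in> carrier (CP X P)" and nz: "\<And>x. x \<in> topspace X \<Longrightarrow> f x \<noteq> 0"
  shows "(\<lambda>z. inverse (f z)) \<in> carrier (CP X P)"
proof -
  have "discont X (\<lambda>z. inverse (f z)) \<subseteq> discont X f \<union> discont X f" using discont_inverse[of X f] nz by simp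
  then show ?thesis unfolding CP_carrier using CP_out[OF f] closed_sub[OF cP f f] by simp
qed

lemma CP_cring: assumes cP: "closed_ideal X P" shows "cring (CP X P)"
proof (rule cringI)
  show "abelian_group (CP X P)"
  proof (rule abelian_groupI)
    fix x assume x: "x \<in> carrier (CP X P)"
    have "(\<lambda>z. - x z) \<in> carrier (CP X P)" using comp_closed[OF cP x, of uminus] by (simp add: continuous_on_minus)
    moreover have "(\<lambda>z. - x z) \<oplus>\<^bsub>CP X P\<^esub> x = \<zero>\<^bsub>CP X P\<^esub>" by simp
    ultimately show "\<exists>y\<in>carrier (CP X P). y \<oplus>\<^bsub>CP X P\<^esub> x = \<zero>\<^bsub>CP X P\<^esub>" by blast
  qed (auto simp: CP_add_closed[OF cP] CP_zero_closed[OF cP] algebra_simps)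
  show "comm_monoid (CP X P)"
  proof (rule comm_monoidI)
    fix x assume x: "x \<in> carrier (CP X P)"
    show "\<one>\<^bsub>CP X P\<^esub> \<otimes>\<^bsub>CP X P\<^esub> x = x" using CP_out[OF x] by (auto simp: fun_eq_iff)
  qed (auto simp: CP_mult_closed[OF cP] CP_one_closed[OF cP] algebra_simps)
qed (auto simp: algebra_simps)

lemma CP_pow: assumes "s \<in> carrier (CP X P)"
  shows "s [^]\<^bsub>CP X P\<^esub> (n::nat) = (\<lambda>z. if z \<in> topspace X then s z ^ n else 0)"
  by (induction n) (auto simp: fun_eq_iff CP_out[OF assms])

lemma CP_units: assumes cP: "closed_ideal X P" and f: "f \<in> carrier (CP X P)"
  shows "f \<in> Units (CP X P) \<longleftrightarrow> Zset X f = {}"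
proof
  assume "f \<in> Units (CP X P)"
  then obtain g where "(\<lambda>z. g z * f z) = (\<lambda>x. if x \<in> topspace X then 1 else 0)"
    unfolding Units_def by auto
  then have "\<And>z. z \<in> topspace X \<Longrightarrow> g z * f z = 1" by metis
  then show "Zset X f = {}" unfolding Zset_def by force
next
  assume Z: "Zset X f = {}"
  then have nz: "\<And>x. x \<in> topspace X \<Longrightarrow> f x \<noteq> 0" unfolding Zset_def by auto
  have g: "(\<lambda>z. inverse (f z)) \<in> carrier (CP X P)" by (rule inverse_closed[OF cP f nz])
  have "(\<lambda>z. inverse (f z) * f z) = (\<lambda>x. if x \<in> topspace X then 1 else 0)"
    "(\<lambda>z. f z * inverse (f z)) = (\<lambda>x. if x \<in> topspace X then 1 else 0)"
    using nz CP_out[OF f] by (auto simp: fun_eq_iff)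
  then show "f \<in> Units (CP X P)" unfolding Units_def using f g by auto
qed

lemma CP_zd: "f \<in> zero_divisors (CP X P) \<longleftrightarrow> f \<in> carrier (CP X P) \<and>
   (\<exists>g\<in>carrier (CP X P). (\<exists>y. g y \<noteq> 0) \<and> (\<forall>z. f z * g z = 0))"
  unfolding zero_divisors_def by (auto simp: fun_eq_iff)

lemma CP_ainv: assumes cP: "closed_ideal X P" and f: "f \<in> carrier (CP X P)"
  shows "\<ominus>\<^bsub>CP X P\<^esub> f = (\<lambda>z. - f z)"
proof -
  interpret cring "CP X P" by (rule CP_cring[OF cP])
  have "(\<lambda>z. - f z) \<in> carrier (CP X P)" using comp_closed[OF cP f, of uminus] by (simp add: continuous_on_minus)
  then show ?thesis using minus_equality[OF _ f] by simp
qed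




lemma Mx_maximal: assumes cP: "closed_ideal X P" and x: "x \<in> topspace X"
  shows "maximalideal {h \<in> carrier (CP X P). h x = 0} (CP X P)"
proof -
  let ?M = "{h \<in> carrier (CP X P). h x = 0}"
  have sg: "subgroup ?M (add_monoid (CP X P))"
  proof (rule subgroup.intro)
    show "?M \<subseteq> carrier (add_monoid (CP X P))" by auto
    have "(\<lambda>z. 0) \<in> ?M" using CP_zero_closed[OF cP] by simp
    then show "\<one>\<^bsub>add_monoid (CP X P)\<^esub> \<in> ?M" by simp
    fix a b assume a: "a \<in> ?M" and b: "b \<in> ?M"
    have "(\<lambda>z. a z + b z) \<in> carrier (CP X P)" using a b by (intro CP_add_closed[OF cP]) simp_all
    then show "a \<otimes>\<^bsub>add_monoid (CP X P)\<^esub> b \<in> ?M" using a b by simp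
    have aC: "a \<in> carrier (CP X P)" using a by simp
    have "(\<lambda>z. - a z) \<in> carrier (CP X P)" using comp_closed[OF cP aC, of uminus] by (simp add: continuous_on_minus)
    then have "(\<lambda>z. - a z) \<in> ?M" using a by simp
    moreover have "inv\<^bsub>add_monoid (CP X P)\<^esub> a = (\<lambda>z. - a z)" using CP_ainv[OF cP aC] by (simp add: a_inv_def)
    ultimately show "inv\<^bsub>add_monoid (CP X P)\<^esub> a \<in> ?M" by simp
  qed
  have id: "ideal ?M (CP X P)"
  proof (rule idealI[OF cring.axioms(1)[OF CP_cring[OF cP]] sg])
    fix a r assume a: "a \<in> ?M" and r: "r \<in> carrier (CP X P)"
    have "(\<lambda>z. r z * a z) \<in> carrier (CP X P)" "(\<lambda>z. a z * r z) \<in> carrier (CP X P)"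
      using a r by (intro CP_mult_closed[OF cP]; simp)+
    then show "r \<otimes>\<^bsub>CP X P\<^esub> a \<in> ?M" "a \<otimes>\<^bsub>CP X P\<^esub> r \<in> ?M" using a by simp_all
  qed
  show ?thesis
  proof (rule maximalidealI[OF id])
    have n: "(\<lambda>x. if x \<in> topspace X then 1 else 0) \<notin> ?M" using x by simp
    show "carrier (CP X P) \<noteq> ?M" using n CP_one_closed[OF cP] by metis
    fix J assume J: "ideal J (CP X P)" "?M \<subseteq> J" "J \<subseteq> carrier (CP X P)"
    show "J = ?M \<or> J = carrier (CP X P)"
    proof (cases "J = ?M")
      case False
      have "\<not> J \<subseteq> ?M" using False J(2) by (meson subset_antisym)
      then obtain h where h0: "h \<in> J" "h \<notin> ?M" by (meson subsetI)
      have hC: "h \<in> carrier (CP X P)" using h0(1) J(3) by (rule subsetD[rotated])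
      have h: "h \<in> J" "h x \<noteq> 0" using h0 hC by simp_all
      let ?u = "\<lambda>z. if z \<in> topspace X then (\<lambda>_. 1 / h x) (h z) else 0"
      let ?k = "\<lambda>z. if z \<in> topspace X then (\<lambda>t. 1 - t / h x) (h z) else 0"
      have uC: "?u \<in> carrier (CP X P)" by (rule compif_closed[OF cP hC]) simp
      have kC: "?k \<in> carrier (CP X P)" by (rule compif_closed[OF cP hC]) (auto intro!: continuous_intros simp: h(2))
      have "?k \<in> ?M" using kC x h(2) by simp
      then have kJ: "?k \<in> J" using J(2) by blast
      have "?u \<otimes>\<^bsub>CP X P\<^esub> h \<in> J" using ideal.I_l_closed[OF J(1) h(1) uC] .
      then have "?u \<otimes>\<^bsub>CP X P\<^esub> h \<oplus>\<^bsub>CP X P\<^esub> ?k \<in> J" by (rule additive_subgroup.a_closed[OF ideal.axioms(1)[OF J(1)] _ kJ])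
      moreover have "?u \<otimes>\<^bsub>CP X P\<^esub> h \<oplus>\<^bsub>CP X P\<^esub> ?k = \<one>\<^bsub>CP X P\<^esub>"
        using h(2) by (auto simp: fun_eq_iff field_simps)
      ultimately have "\<one>\<^bsub>CP X P\<^esub> \<in> J" by simp
      then show ?thesis by (rule disjI2[OF ideal.one_imp_carrier[OF J(1)]])
    qed (rule disjI1)
  qed
qed

lemma coz_open: "g \<in> carrier (CP X P) \<Longrightarrow> openin (XP X P) (coz X g)"
  unfolding XP_def by (rule topology_generated_by_Basis) blast

lemma coz_mult: "coz X (\<lambda>z. f z * g z) = coz X f \<inter> coz X g"
  unfolding coz_def by auto

lemma XP_open_witness:
  assumes cP: "closed_ideal X P" and T: "openin (XP X P) T" and xT: "x \<in> T"
  shows "\<exists>g\<in>carrier (CP X P). g x \<noteq> 0 \<and> coz X g \<subseteq> T"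
proof -
  have gen: "generate_topology_on {coz X f | f. f \<in> carrier (CP X P)} T"
    using T unfolding XP_def by (rule openin_topology_generated_by)
  have "\<And>x. x \<in> T \<Longrightarrow> \<exists>g\<in>carrier (CP X P). g x \<noteq> 0 \<and> coz X g \<subseteq> T"
    using gen
  proof (induction)
    case Empty
    then show ?case by simp
  next
    case (Int a b)
    then obtain g1 g2 where g: "g1 \<in> carrier (CP X P)" "g1 x \<noteq> 0" "coz X g1 \<subseteq> a"
      "g2 \<in> carrier (CP X P)" "g2 x \<noteq> 0" "coz X g2 \<subseteq> b" by (meson IntD1 IntD2)
    have "(\<lambda>z. g1 z * g2 z) \<in> carrier (CP X P)" using CP_mult_closed[OF cP g(1) g(4)] .
    moreover have "coz X (\<lambda>z. g1 z * g2 z) \<subseteq> a \<inter> b" using g by (auto simp: coz_mult)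
    ultimately show ?case using g by (intro bexI[of _ "\<lambda>z. g1 z * g2 z"]) auto
  next
    case (UN K)
    then obtain k where "k \<in> K" "x \<in> k" by blast
    then show ?case using UN.IH by blast
  next
    case (Basis s)
    then obtain f where f: "s = coz X f" "f \<in> carrier (CP X P)" by blast
    then show ?case using Basis.prems by (auto simp: coz_def)
  qed
  then show ?thesis using xT .
qed

lemma almost_PP_iff: assumes cP: "closed_ideal X P"
  shows "almost_PP X P \<longleftrightarrow> (\<forall>f\<in>carrier (CP X P). Zset X f \<noteq> {} \<longrightarrow> f \<in> zero_divisors (CP X P))"
proof
  assume A: "almost_PP X P"
  show "\<forall>f\<in>carrier (CP X P). Zset X f \<noteq> {} \<longrightarrow> f \<in> zero_divisors (CP X P)"
  proof (intro ballI impI)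
    fix f assume f: "f \<in> carrier (CP X P)" "Zset X f \<noteq> {}"
    then obtain y where "y \<in> XP X P interior_of Zset X f" using A unfolding almost_PP_def by blast
    then obtain T where T: "openin (XP X P) T" "y \<in> T" "T \<subseteq> Zset X f" unfolding interior_of_def by blast
    obtain g where g: "g \<in> carrier (CP X P)" "g y \<noteq> 0" "coz X g \<subseteq> T"
      using XP_open_witness[OF cP T(1,2)] by blast
    have "f z * g z = 0" for z
    proof (cases "g z = 0")
      case False
      then have "z \<in> topspace X" using CP_out[OF g(1)] by blast
      then have "z \<in> coz X g" using False by (simp add: coz_def)
      then have "f z = 0" using g(3) T(3) by (auto simp: Zset_def)
      then show ?thesis by simp
    qed simp
    then show "f \<in> zero_divisors (CP X P)" using f g by (auto simp: CP_zd)
  qed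
next
  assume B: "\<forall>f\<in>carrier (CP X P). Zset X f \<noteq> {} \<longrightarrow> f \<in> zero_divisors (CP X P)"
  show "almost_PP X P" unfolding almost_PP_def
  proof (intro ballI impI)
    fix f assume f: "f \<in> carrier (CP X P)" "Zset X f \<noteq> {}"
    then have "f \<in> zero_divisors (CP X P)" using B by blast
    then obtain g y where g: "g \<in> carrier (CP X P)" "g y \<noteq> 0" "\<And>z. f z * g z = 0"
      unfolding CP_zd by blast
    have y: "y \<in> topspace X" using CP_out[OF g(1)] g(2) by blast
    have sub: "coz X g \<subseteq> Zset X f" using g(3) by (auto simp: coz_def Zset_def)
    have "coz X g \<subseteq> XP X P interior_of Zset X f"
      by (rule interior_of_maximal[OF sub coz_open[OF g(1)]])
    moreover have "y \<in> coz X g" using y g(2) by (simp add: coz_def)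
    ultimately show "XP X P interior_of Zset X f \<noteq> {}" by blast
  qed
qed

lemma unit_ideal: assumes cP: "closed_ideal X P" and I: "ideal I (CP X P)" and u: "u \<in> I" and Z: "Zset X u = {}"
  shows "I = carrier (CP X P)"
proof -
  interpret I: ideal I "CP X P" by (rule I)
  have uC: "u \<in> carrier (CP X P)" using u I.Icarr by blast
  have "u \<in> Units (CP X P)" using CP_units[OF cP uC] Z by simp
  then obtain v where v: "v \<in> carrier (CP X P)" "v \<otimes>\<^bsub>CP X P\<^esub> u = \<one>\<^bsub>CP X P\<^esub>" unfolding Units_def by blast
  have "v \<otimes>\<^bsub>CP X P\<^esub> u \<in> I" using I.I_l_closed[OF u v(1)] .
  then have "\<one>\<^bsub>CP X P\<^esub> \<in> I" using v(2) by simp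
  then show ?thesis by (rule I.one_imp_carrier)
qed

lemma Mset_Z: assumes cP: "closed_ideal X P" and a: "a \<in> carrier (CP X P)" and b: "b \<in> carrier (CP X P)"
  and Z: "Zset X a \<subseteq> Zset X b"
  shows "b \<in> Mset (CP X P) a"
proof -
  interpret cring "CP X P" by (rule CP_cring[OF cP])
  have "b \<in> M" if M: "maximalideal M (CP X P)" "a \<in> M" for M
  proof (rule ccontr)
    assume bM: "b \<notin> M"
    interpret M: maximalideal M "CP X P" by (rule M(1))
    let ?J = "M <+>\<^bsub>CP X P\<^esub> PIdl\<^bsub>CP X P\<^esub> b"
    have J: "ideal ?J (CP X P)" by (rule add_ideals[OF M.is_ideal cgenideal_ideal[OF b]])
    have "M \<subseteq> ?J"
    proof
      fix m assume m: "m \<in> M"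
      have "m = m \<oplus>\<^bsub>CP X P\<^esub> \<zero>\<^bsub>CP X P\<^esub> \<otimes>\<^bsub>CP X P\<^esub> b" "\<zero>\<^bsub>CP X P\<^esub> \<otimes>\<^bsub>CP X P\<^esub> b \<in> PIdl\<^bsub>CP X P\<^esub> b"
        using m M.Icarr b by (auto simp: cgenideal_def intro!: exI[of _ "\<zero>\<^bsub>CP X P\<^esub>"])
      then show "m \<in> ?J" using m unfolding set_add_def' by blast
    qed
    moreover have "b \<in> ?J"
    proof -
      have "b = \<zero>\<^bsub>CP X P\<^esub> \<oplus>\<^bsub>CP X P\<^esub> \<one>\<^bsub>CP X P\<^esub> \<otimes>\<^bsub>CP X P\<^esub> b"
        using b by (metis l_one l_zero one_closed m_closed)
      moreover have "\<one>\<^bsub>CP X P\<^esub> \<otimes>\<^bsub>CP X P\<^esub> b \<in> PIdl\<^bsub>CP X P\<^esub> b"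
        unfolding cgenideal_def using one_closed by blast
      moreover have "\<zero>\<^bsub>CP X P\<^esub> \<in> M" by (rule additive_subgroup.zero_closed[OF M.is_additive_subgroup])
      ultimately show ?thesis unfolding set_add_def' by blast
    qed
    moreover have "?J \<subseteq> carrier (CP X P)" using ideal.Icarr[OF J] by blast
    ultimately have "?J = carrier (CP X P)" using M.I_maximal[OF J] bM by blast
    then have "\<one>\<^bsub>CP X P\<^esub> \<in> ?J" using CP_one_closed[OF cP] by simp
    then obtain m r where mr: "m \<in> M" "r \<in> carrier (CP X P)" "\<one>\<^bsub>CP X P\<^esub> = m \<oplus>\<^bsub>CP X P\<^esub> r \<otimes>\<^bsub>CP X P\<^esub> b"
      unfolding set_add_def' cgenideal_def by blast
    have mC: "m \<in> carrier (CP X P)" using mr(1) M.Icarr by blast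
    let ?u = "a \<otimes>\<^bsub>CP X P\<^esub> a \<oplus>\<^bsub>CP X P\<^esub> m \<otimes>\<^bsub>CP X P\<^esub> m"
    have uM: "?u \<in> M" using M.I_l_closed[OF M(2) a] M.I_l_closed[OF mr(1) mC] M.a_closed by blast
    have "Zset X ?u = {}"
    proof (rule ccontr)
      assume "Zset X ?u \<noteq> {}"
      then obtain z where z: "z \<in> topspace X" "a z * a z + m z * m z = 0" by (auto simp: Zset_def)
      then have "a z = 0" "m z = 0" by (auto simp: sum_squares_eq_zero_iff)
      then have "b z = 0" using Z z(1) by (auto simp: Zset_def)
      have "1 = m z + r z * b z" using mr(3) z(1) by (metis CP_add CP_mult CP_one)
      then show False using \<open>m z = 0\<close> \<open>b z = 0\<close> by simp
    qed
    then have "M = carrier (CP X P)" using unit_ideal[OF cP M.is_ideal uM] by blast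
    then show False using M.I_notcarr by simp
  qed
  then show ?thesis unfolding Mset_def using b by blast
qed




lemma CP_reduced: assumes cP: "closed_ideal X P" and s: "s \<in> carrier (CP X P)"
  and e: "s [^]\<^bsub>CP X P\<^esub> (n::nat) = \<zero>\<^bsub>CP X P\<^esub>"
  shows "s = \<zero>\<^bsub>CP X P\<^esub>"
proof -
  have "(\<lambda>z. if z \<in> topspace X then s z ^ n else 0) = (\<lambda>x. 0)" using e CP_pow[OF s] by simp
  then have "\<And>z. z \<in> topspace X \<Longrightarrow> s z ^ n = 0" by (metis (mono_tags, lifting))
  then have "\<And>z. s z = 0" using CP_out[OF s] by (metis power_eq_0_iff)
  then show ?thesis by (simp add: fun_eq_iff)
qed

lemma CP_Pset_ann: assumes cP: "closed_ideal X P" and a: "a \<in> carrier (CP X P)" and b: "b \<in> carrier (CP X P)"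
  and h: "h \<in> carrier (CP X P)" and ha: "\<And>z. h z * a z = 0" and bP: "b \<in> Pset (CP X P) a"
  shows "h z * b z = 0"
proof -
  have "h \<otimes>\<^bsub>CP X P\<^esub> a = \<zero>\<^bsub>CP X P\<^esub>" using ha by (simp add: fun_eq_iff)
  then have "h \<otimes>\<^bsub>CP X P\<^esub> b = \<zero>\<^bsub>CP X P\<^esub>"
    using cring.Pset_ann[OF CP_cring[OF cP] _ a b h _ bP] CP_reduced[OF cP] by blast
  then show ?thesis by (simp add: fun_eq_iff)
qed

lemma CP_minprime: assumes cP: "closed_ideal X P" and q: "minimal_prime (CP X P) q" and f: "f \<in> q"
  shows "\<exists>c\<in>carrier (CP X P). (\<exists>y. c y \<noteq> 0) \<and> (\<forall>z. c z * f z = 0)"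
proof -
  obtain c n where c: "c \<in> carrier (CP X P)" "c \<notin> q" "c \<otimes>\<^bsub>CP X P\<^esub> f [^]\<^bsub>CP X P\<^esub> (n::nat) = \<zero>\<^bsub>CP X P\<^esub>"
    using cring.minimal_prime_ann[OF CP_cring[OF cP] q f] by blast
  have pq: "primeideal q (CP X P)" using q by (simp add: minimal_prime_def)
  have idq: "ideal q (CP X P)" using pq by (rule primeideal.axioms(1))
  have fC: "f \<in> carrier (CP X P)" using ideal.Icarr[OF idq f] .
  have "\<zero>\<^bsub>CP X P\<^esub> \<in> q" by (rule additive_subgroup.zero_closed[OF ideal.axioms(1)[OF idq]])
  then have "c \<noteq> (\<lambda>x. 0)" using c(2) by auto
  then have "\<exists>y. c y \<noteq> 0" by auto
  moreover have "c z * f z = 0" for z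
  proof -
    have "c z * (if z \<in> topspace X then f z ^ n else 0) = 0"
      using c(3) CP_pow[OF fC] by (metis CP_mult CP_zero)
    then show ?thesis using CP_out[OF fC, of z] by (cases "z \<in> topspace X") auto
  qed
  ultimately show ?thesis using c(1) by blast
qed

lemma E1: assumes cP: "closed_ideal X P" and A: "almost_PP X P" and I: "z_ideal (CP X P) I"
  shows "z0_ideal (CP X P) I"
proof -
  have Aiff: "\<And>f. f \<in> carrier (CP X P) \<Longrightarrow> Zset X f \<noteq> {} \<Longrightarrow> f \<in> zero_divisors (CP X P)"
    using A almost_PP_iff[OF cP] by blast
  have idI: "ideal I (CP X P)" using I by (simp add: z_ideal_def)
  have zI: "\<And>a. a \<in> I \<Longrightarrow> Mset (CP X P) a \<subseteq> I" using I by (simp add: z_ideal_def)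
  have "Pset (CP X P) a \<subseteq> I" if aI: "a \<in> I" for a
  proof
    fix b assume bP: "b \<in> Pset (CP X P) a"
    have a: "a \<in> carrier (CP X P)" using ideal.Icarr[OF idI aI] .
    have b: "b \<in> carrier (CP X P)" using bP by (simp add: Pset_def)
    have "Zset X a \<subseteq> Zset X b"
    proof
      fix z assume z: "z \<in> Zset X a"
      show "z \<in> Zset X b"
      proof (rule ccontr)
        assume nb: "z \<notin> Zset X b"
        have zt: "z \<in> topspace X" "a z = 0" using z by (auto simp: Zset_def)
        then have bz: "b z \<noteq> 0" using nb by (auto simp: Zset_def)
        define c where "c = \<bar>b z\<bar> / 2"
        have c0: "c > 0" using bz by (simp add: c_def)
        let ?w = "\<lambda>w. if w \<in> topspace X then (\<lambda>s. (min (\<bar>s\<bar> - c) 0)^2) (b w) else 0"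
        have wC: "?w \<in> carrier (CP X P)" by (rule compif_closed[OF cP b]) (intro continuous_intros)
        let ?k = "\<lambda>w. a w * a w + ?w w"
        have kC: "?k \<in> carrier (CP X P)" by (rule CP_add_closed[OF cP CP_mult_closed[OF cP a a] wC])
        have "?k z = 0" using zt c0 by (simp add: c_def)
        then have "z \<in> Zset X ?k" using zt by (simp add: Zset_def)
        then have "?k \<in> zero_divisors (CP X P)" using Aiff[OF kC] by blast
        then obtain g y where g: "g \<in> carrier (CP X P)" "g y \<noteq> 0" "\<And>w. ?k w * g w = 0"
          unfolding CP_zd by blast
        have gw: "a w = 0 \<and> \<bar>b w\<bar> \<ge> c" if gw0: "g w \<noteq> 0" for w
        proof -
          have wt: "w \<in> topspace X" using CP_out[OF g(1)] gw0 by blast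
          have "?k w = 0" using g(3)[of w] gw0 by simp
          then have "a w * a w + (min (\<bar>b w\<bar> - c) 0)^2 = 0" using wt by simp
          then have "a w = 0" "min (\<bar>b w\<bar> - c) 0 = 0"
            by (auto simp: sum_squares_eq_zero_iff power2_eq_square)
          then show ?thesis by linarith
        qed
        have "g w * a w = 0" for w using gw[of w] by (cases "g w = 0") auto
        then have "g y * b y = 0" using CP_Pset_ann[OF cP a b g(1) _ bP] by blast
        then show False using gw[OF g(2)] g(2) c0 by auto
      qed
    qed
    then have "b \<in> Mset (CP X P) a" by (rule Mset_Z[OF cP a b])
    then show "b \<in> I" using zI[OF aI] by blast
  qed
  then show ?thesis using idI by (simp add: z0_ideal_def)
qed

lemma E2: assumes "maximalideal M (CP X P)" shows "z_ideal (CP X P) M"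
proof -
  have "ideal M (CP X P)" using assms by (rule maximalideal.axioms(1))
  moreover have "\<forall>a\<in>M. Mset (CP X P) a \<subseteq> M" using assms unfolding Mset_def by blast
  ultimately show ?thesis by (simp add: z_ideal_def)
qed

lemma E3: assumes cP: "closed_ideal X P" and H: "\<And>M. maximalideal M (CP X P) \<Longrightarrow> z0_ideal (CP X P) M"
  shows "almost_PP X P"
  unfolding almost_PP_iff[OF cP]
proof (intro ballI impI)
  fix f assume f: "f \<in> carrier (CP X P)" "Zset X f \<noteq> {}"
  show "f \<in> zero_divisors (CP X P)"
  proof (rule ccontr)
    assume nzd: "f \<notin> zero_divisors (CP X P)"
    obtain x where x: "x \<in> topspace X" "f x = 0" using f(2) by (auto simp: Zset_def)
    let ?M = "{h \<in> carrier (CP X P). h x = 0}"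
    have M: "maximalideal ?M (CP X P)" by (rule Mx_maximal[OF cP x(1)])
    have fM: "f \<in> ?M" using f(1) x(2) by simp
    have "Pset (CP X P) f \<subseteq> ?M" using H[OF M] fM unfolding z0_ideal_def by blast
    moreover have "\<one>\<^bsub>CP X P\<^esub> \<in> Pset (CP X P) f"
    proof -
      have "\<not> (minimal_prime (CP X P) q \<and> f \<in> q)" for q
      proof
        assume q: "minimal_prime (CP X P) q \<and> f \<in> q"
        then obtain c where c: "c \<in> carrier (CP X P)" "\<exists>y. c y \<noteq> 0" "\<forall>z. c z * f z = 0"
          using CP_minprime[OF cP] by blast
        have "\<forall>z. f z * c z = 0" using c(3) by (simp add: mult.commute)
        then have "f \<in> zero_divisors (CP X P)" using f(1) c(1,2) unfolding CP_zd by blast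
        then show False using nzd by blast
      qed
      then show ?thesis unfolding Pset_def using CP_one_closed[OF cP] by auto
    qed
    ultimately have "\<one>\<^bsub>CP X P\<^esub> \<in> ?M" by (rule subsetD)
    then show False using x(1) by simp
  qed
qed




lemma ring_CP: "closed_ideal X P \<Longrightarrow> ring (CP X P)"
  using CP_cring cring.axioms(1) by blast

lemma E4: assumes cP: "closed_ideal X P"
  shows "almost_PP X P \<longleftrightarrow> (\<forall>M. maximalideal M (CP X P) \<longrightarrow> M \<subseteq> zero_divisors (CP X P))"
proof
  assume A: "almost_PP X P"
  have Aiff: "\<And>f. f \<in> carrier (CP X P) \<Longrightarrow> Zset X f \<noteq> {} \<Longrightarrow> f \<in> zero_divisors (CP X P)"
    using A almost_PP_iff[OF cP] by blast
  show "\<forall>M. maximalideal M (CP X P) \<longrightarrow> M \<subseteq> zero_divisors (CP X P)"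
  proof (intro allI impI subsetI)
    fix M f assume M: "maximalideal M (CP X P)" and f: "f \<in> M"
    have idM: "ideal M (CP X P)" using M by (rule maximalideal.axioms(1))
    have fC: "f \<in> carrier (CP X P)" using ideal.Icarr[OF idM f] .
    have "Zset X f \<noteq> {}"
    proof
      assume "Zset X f = {}"
      then have "M = carrier (CP X P)" by (rule unit_ideal[OF cP idM f])
      then show False using maximalideal.I_notcarr[OF M] by simp
    qed
    then show "f \<in> zero_divisors (CP X P)" by (rule Aiff[OF fC])
  qed
next
  assume H: "\<forall>M. maximalideal M (CP X P) \<longrightarrow> M \<subseteq> zero_divisors (CP X P)"
  show "almost_PP X P" unfolding almost_PP_iff[OF cP]
  proof (intro ballI impI)
    fix f assume f: "f \<in> carrier (CP X P)" "Zset X f \<noteq> {}"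
    obtain x where x: "x \<in> topspace X" "f x = 0" using f(2) by (auto simp: Zset_def)
    have M: "maximalideal {h \<in> carrier (CP X P). h x = 0} (CP X P)" by (rule Mx_maximal[OF cP x(1)])
    have "f \<in> {h \<in> carrier (CP X P). h x = 0}" using f(1) x(2) by simp
    then show "f \<in> zero_divisors (CP X P)" using H M by blast
  qed
qed

lemma E6: assumes cP: "closed_ideal X P"
  shows "almost_PP X P \<longleftrightarrow> (\<forall>f \<in> carrier (CP X P). f \<notin> Units (CP X P) \<longrightarrow>
              (\<exists>g \<in> carrier (CP X P). g \<noteq> \<zero>\<^bsub>CP X P\<^esub> \<and> Pset (CP X P) f \<subseteq> Ann (CP X P) g))"
proof
  assume A: "almost_PP X P"
  have Aiff: "\<And>f. f \<in> carrier (CP X P) \<Longrightarrow> Zset X f \<noteq> {} \<Longrightarrow> f \<in> zero_divisors (CP X P)"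
    using A almost_PP_iff[OF cP] by blast
  show "\<forall>f \<in> carrier (CP X P). f \<notin> Units (CP X P) \<longrightarrow>
              (\<exists>g \<in> carrier (CP X P). g \<noteq> \<zero>\<^bsub>CP X P\<^esub> \<and> Pset (CP X P) f \<subseteq> Ann (CP X P) g)"
  proof (intro ballI impI)
    fix f assume f: "f \<in> carrier (CP X P)" "f \<notin> Units (CP X P)"
    have "Zset X f \<noteq> {}" using f CP_units[OF cP f(1)] by blast
    then have "f \<in> zero_divisors (CP X P)" by (rule Aiff[OF f(1)])
    then obtain g y where g: "g \<in> carrier (CP X P)" "g y \<noteq> 0" "\<And>z. f z * g z = 0"
      unfolding CP_zd by blast
    have gn: "g \<noteq> \<zero>\<^bsub>CP X P\<^esub>" using g(2) by auto
    have "Pset (CP X P) f \<subseteq> Ann (CP X P) g"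
    proof
      fix b assume bP: "b \<in> Pset (CP X P) f"
      have b: "b \<in> carrier (CP X P)" using bP by (simp add: Pset_def)
      have "\<And>z. g z * f z = 0" using g(3) by (simp add: mult.commute)
      then have "\<And>z. g z * b z = 0" using CP_Pset_ann[OF cP f(1) b g(1) _ bP] by blast
      then show "b \<in> Ann (CP X P) g" using b by (simp add: Ann_def fun_eq_iff mult.commute)
    qed
    then show "\<exists>g \<in> carrier (CP X P). g \<noteq> \<zero>\<^bsub>CP X P\<^esub> \<and> Pset (CP X P) f \<subseteq> Ann (CP X P) g"
      using g(1) gn by blast
  qed
next
  assume H: "\<forall>f \<in> carrier (CP X P). f \<notin> Units (CP X P) \<longrightarrow>
              (\<exists>g \<in> carrier (CP X P). g \<noteq> \<zero>\<^bsub>CP X P\<^esub> \<and> Pset (CP X P) f \<subseteq> Ann (CP X P) g)"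
  show "almost_PP X P" unfolding almost_PP_iff[OF cP]
  proof (intro ballI impI)
    fix f assume f: "f \<in> carrier (CP X P)" "Zset X f \<noteq> {}"
    have "f \<notin> Units (CP X P)" using CP_units[OF cP f(1)] f(2) by blast
    then obtain g where g: "g \<in> carrier (CP X P)" "g \<noteq> \<zero>\<^bsub>CP X P\<^esub>" "Pset (CP X P) f \<subseteq> Ann (CP X P) g"
      using H f(1) by blast
    have "f \<in> Pset (CP X P) f" using f(1) unfolding Pset_def by blast
    then have "f \<in> Ann (CP X P) g" using g(3) by blast
    then have "\<forall>z. f z * g z = 0" by (simp add: Ann_def fun_eq_iff)
    moreover have "\<exists>y. g y \<noteq> 0" using g(2) by (auto simp: fun_eq_iff)
    ultimately show "f \<in> zero_divisors (CP X P)" using f(1) g(1) unfolding CP_zd by blast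
  qed
qed




lemma E5: assumes cP: "closed_ideal X P"
  shows "almost_PP X P \<longleftrightarrow> (\<forall>I J. ideal I (CP X P) \<and> I \<subseteq> zero_divisors (CP X P)
              \<and> ideal J (CP X P) \<and> J \<subseteq> zero_divisors (CP X P)
              \<longrightarrow> I <+>\<^bsub>CP X P\<^esub> J = carrier (CP X P) \<or> I <+>\<^bsub>CP X P\<^esub> J \<subseteq> zero_divisors (CP X P))"
proof
  assume A: "almost_PP X P"
  have Aiff: "\<And>f. f \<in> carrier (CP X P) \<Longrightarrow> Zset X f \<noteq> {} \<Longrightarrow> f \<in> zero_divisors (CP X P)"
    using A almost_PP_iff[OF cP] by blast
  show "\<forall>I J. ideal I (CP X P) \<and> I \<subseteq> zero_divisors (CP X P)
              \<and> ideal J (CP X P) \<and> J \<subseteq> zero_divisors (CP X P)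
              \<longrightarrow> I <+>\<^bsub>CP X P\<^esub> J = carrier (CP X P) \<or> I <+>\<^bsub>CP X P\<^esub> J \<subseteq> zero_divisors (CP X P)"
  proof (intro allI impI)
    fix I J assume IJ: "ideal I (CP X P) \<and> I \<subseteq> zero_divisors (CP X P)
              \<and> ideal J (CP X P) \<and> J \<subseteq> zero_divisors (CP X P)"
    have K: "ideal (I <+>\<^bsub>CP X P\<^esub> J) (CP X P)"
      using ring.add_ideals[OF ring_CP[OF cP]] IJ by blast
    show "I <+>\<^bsub>CP X P\<^esub> J = carrier (CP X P) \<or> I <+>\<^bsub>CP X P\<^esub> J \<subseteq> zero_divisors (CP X P)"
    proof (cases "\<exists>u\<in>I <+>\<^bsub>CP X P\<^esub> J. Zset X u = {}")
      case True
      then obtain u where "u \<in> I <+>\<^bsub>CP X P\<^esub> J" "Zset X u = {}" by blast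
      then show ?thesis using unit_ideal[OF cP K] by blast
    next
      case False
      have "u \<in> zero_divisors (CP X P)" if u: "u \<in> I <+>\<^bsub>CP X P\<^esub> J" for u
      proof -
        have "u \<in> carrier (CP X P)" using ideal.Icarr[OF K u] .
        moreover have "Zset X u \<noteq> {}" using False u by blast
        ultimately show ?thesis by (rule Aiff)
      qed
      then show ?thesis by blast
    qed
  qed
next
  assume H: "\<forall>I J. ideal I (CP X P) \<and> I \<subseteq> zero_divisors (CP X P)
              \<and> ideal J (CP X P) \<and> J \<subseteq> zero_divisors (CP X P)
              \<longrightarrow> I <+>\<^bsub>CP X P\<^esub> J = carrier (CP X P) \<or> I <+>\<^bsub>CP X P\<^esub> J \<subseteq> zero_divisors (CP X P)"
  show "almost_PP X P" unfolding almost_PP_iff[OF cP]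
  proof (intro ballI impI)
    fix f assume f: "f \<in> carrier (CP X P)" "Zset X f \<noteq> {}"
    show "f \<in> zero_divisors (CP X P)"
    proof (rule ccontr)
      assume nzd: "f \<notin> zero_divisors (CP X P)"
      obtain x where x: "x \<in> topspace X" "f x = 0" using f(2) by (auto simp: Zset_def)
      have "\<exists>y\<in>topspace X. f y \<noteq> 0"
      proof (rule ccontr)
        assume "\<not> (\<exists>y\<in>topspace X. f y \<noteq> 0)"
        then have "\<forall>z. f z * (if z \<in> topspace X then 1 else 0) = 0" by auto
        moreover have "\<exists>y. (\<lambda>x. if x \<in> topspace X then 1 else (0::real)) y \<noteq> 0" using x(1) by (intro exI[of _ x]) simp
        ultimately have "f \<in> zero_divisors (CP X P)"
          unfolding CP_zd using f(1) CP_one_closed[OF cP] by (intro conjI bexI[of _ "\<lambda>x. if x \<in> topspace X then 1 else (0::real)"])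
        then show False using nzd by blast
      qed
      then obtain y where y: "y \<in> topspace X" "f y \<noteq> 0" by blast
      define c where "c = \<bar>f y\<bar>"
      have c0: "c > 0" using y(2) by (simp add: c_def)
      define \<theta> :: "real \<Rightarrow> real" where "\<theta> s = max 0 (min 1 (3 * s / c - 1))" for s
      have th_cont: "continuous_on UNIV \<theta>" unfolding \<theta>_def using c0 by (intro continuous_intros) auto
      have th0: "\<theta> s = 0" if "s < c / 3" for s
      proof -
        have "3 * s / c - 1 < 0" using that c0 by (simp add: field_simps)
        then show ?thesis by (simp add: \<theta>_def)
      qed
      have th1: "\<theta> s = 1" if "s > 2 * c / 3" for s
      proof -
        have "3 * s / c - 1 > 1" using that c0 by (simp add: field_simps)
        then show ?thesis by (simp add: \<theta>_def)
      qed
      have thabs: "continuous_on UNIV (\<lambda>s. \<theta> \<bar>s\<bar>)"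
        by (rule continuous_on_compose2[OF th_cont continuous_on_rabs[OF continuous_on_id] subset_UNIV])
      let ?g = "\<lambda>z. \<bar>f z\<bar> * \<theta> \<bar>f z\<bar>"
      let ?h = "\<lambda>z. \<bar>f z\<bar> * (1 - \<theta> \<bar>f z\<bar>)"
      let ?k1 = "\<lambda>z. if z \<in> topspace X then max 0 (c / 3 - \<bar>f z\<bar>) else 0"
      let ?k2 = "\<lambda>z. max 0 (\<bar>f z\<bar> - 2 * c / 3)"
      have cg: "continuous_on UNIV (\<lambda>s. \<bar>s\<bar> * \<theta> \<bar>s\<bar>)" using thabs by (intro continuous_intros)
      have gC: "?g \<in> carrier (CP X P)" using comp_closed[OF cP f(1) cg] by simp
      have ch: "continuous_on UNIV (\<lambda>s. \<bar>s\<bar> * (1 - \<theta> \<bar>s\<bar>))" using thabs by (intro continuous_intros)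
      have hC: "?h \<in> carrier (CP X P)" using comp_closed[OF cP f(1) ch] by simp
      have ck1: "continuous_on UNIV (\<lambda>s. max 0 (c / 3 - \<bar>s\<bar>))" by (intro continuous_intros)
      have k1C: "?k1 \<in> carrier (CP X P)" using compif_closed[OF cP f(1) ck1] by simp
      have ck2: "continuous_on UNIV (\<lambda>s. max 0 (\<bar>s\<bar> - 2 * c / 3))" by (intro continuous_intros)
      have k2C: "?k2 \<in> carrier (CP X P)" using comp_closed[OF cP f(1) ck2] c0 by simp
      have gk: "?g z * ?k1 z = 0" for z
      proof (cases "z \<in> topspace X \<and> \<bar>f z\<bar> < c / 3")
        case True then show ?thesis using th0 by simp
      next
        case False then show ?thesis by auto
      qed
      have hk: "?h z * ?k2 z = 0" for z
      proof (cases "\<bar>f z\<bar> > 2 * c / 3")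
        case True then show ?thesis using th1 by simp
      next
        case False then show ?thesis by auto
      qed
      have k1x: "\<exists>y. ?k1 y \<noteq> 0" using x c0 by (intro exI[of _ x]) simp
      have k2y: "\<exists>y. ?k2 y \<noteq> 0" using c0 by (intro exI[of _ y]) (simp add: c_def)
      have cr: "cring (CP X P)" by (rule CP_cring[OF cP])
      have Ig: "ideal (PIdl\<^bsub>CP X P\<^esub> ?g) (CP X P)" by (rule cring.cgenideal_ideal[OF cr gC])
      have Ih: "ideal (PIdl\<^bsub>CP X P\<^esub> ?h) (CP X P)" by (rule cring.cgenideal_ideal[OF cr hC])
      have Zg: "PIdl\<^bsub>CP X P\<^esub> ?g \<subseteq> zero_divisors (CP X P)"
      proof
        fix u assume "u \<in> PIdl\<^bsub>CP X P\<^esub> ?g"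
        then obtain r where r: "r \<in> carrier (CP X P)" "u = r \<otimes>\<^bsub>CP X P\<^esub> ?g" unfolding cgenideal_def by blast
        have uC: "u \<in> carrier (CP X P)" using r CP_mult_closed[OF cP r(1) gC] by simp
        have "\<forall>z. u z * ?k1 z = 0" using r(2) gk by (simp add: mult.assoc)
        then show "u \<in> zero_divisors (CP X P)" unfolding CP_zd using uC k1C k1x by (intro conjI bexI[of _ ?k1])
      qed
      have Zh: "PIdl\<^bsub>CP X P\<^esub> ?h \<subseteq> zero_divisors (CP X P)"
      proof
        fix u assume "u \<in> PIdl\<^bsub>CP X P\<^esub> ?h"
        then obtain r where r: "r \<in> carrier (CP X P)" "u = r \<otimes>\<^bsub>CP X P\<^esub> ?h" unfolding cgenideal_def by blast
        have uC: "u \<in> carrier (CP X P)" using r CP_mult_closed[OF cP r(1) hC] by simp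
        have "\<forall>z. u z * ?k2 z = 0" using r(2) hk by (simp add: mult.assoc)
        then show "u \<in> zero_divisors (CP X P)" unfolding CP_zd using uC k2C k2y by (intro conjI bexI[of _ ?k2])
      qed
      have D: "PIdl\<^bsub>CP X P\<^esub> ?g <+>\<^bsub>CP X P\<^esub> PIdl\<^bsub>CP X P\<^esub> ?h = carrier (CP X P) \<or>
               PIdl\<^bsub>CP X P\<^esub> ?g <+>\<^bsub>CP X P\<^esub> PIdl\<^bsub>CP X P\<^esub> ?h \<subseteq> zero_divisors (CP X P)"
        using H Ig Ih Zg Zh by blast
      show False
      proof (cases "PIdl\<^bsub>CP X P\<^esub> ?g <+>\<^bsub>CP X P\<^esub> PIdl\<^bsub>CP X P\<^esub> ?h = carrier (CP X P)")
        case True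
        have "(\<lambda>x. if x \<in> topspace X then 1 else 0) \<in> carrier (CP X P)" by (rule CP_one_closed[OF cP])
        then have "(\<lambda>x. if x \<in> topspace X then 1 else 0) \<in> PIdl\<^bsub>CP X P\<^esub> ?g <+>\<^bsub>CP X P\<^esub> PIdl\<^bsub>CP X P\<^esub> ?h"
          using True by (simp only:)
        then obtain r s where rs: "(\<lambda>x. if x \<in> topspace X then 1 else 0) = (\<lambda>z. r z * ?g z + s z * ?h z)"
          unfolding set_add_def' cgenideal_def by auto
        have "(\<lambda>x. if x \<in> topspace X then 1 else (0::real)) x = r x * ?g x + s x * ?h x"
          using fun_cong[OF rs, of x] by simp
        then show False using x by simp
      next
        case False
        then have sub: "PIdl\<^bsub>CP X P\<^esub> ?g <+>\<^bsub>CP X P\<^esub> PIdl\<^bsub>CP X P\<^esub> ?h \<subseteq> zero_divisors (CP X P)"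
          using D by blast
        have "?g \<in> PIdl\<^bsub>CP X P\<^esub> ?g" by (rule ring.cgenideal_self[OF ring_CP[OF cP] gC])
        moreover have "?h \<in> PIdl\<^bsub>CP X P\<^esub> ?h" by (rule ring.cgenideal_self[OF ring_CP[OF cP] hC])
        moreover have "(\<lambda>z. \<bar>f z\<bar>) = ?g \<oplus>\<^bsub>CP X P\<^esub> ?h" by (simp add: fun_eq_iff algebra_simps)
        ultimately have "(\<lambda>z. \<bar>f z\<bar>) \<in> PIdl\<^bsub>CP X P\<^esub> ?g <+>\<^bsub>CP X P\<^esub> PIdl\<^bsub>CP X P\<^esub> ?h"
          unfolding set_add_def' by blast
        then have "(\<lambda>z. \<bar>f z\<bar>) \<in> zero_divisors (CP X P)" using sub by blast
        then obtain k where k: "k \<in> carrier (CP X P)" "\<exists>y. k y \<noteq> 0" "\<forall>z. \<bar>f z\<bar> * k z = 0"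
          unfolding CP_zd by blast
        have "\<forall>z. f z * k z = 0" using k(3) by (simp add: abs_mult[symmetric])
        then have "f \<in> zero_divisors (CP X P)" using f(1) k(1,2) unfolding CP_zd by blast
        then show False using nzd by blast
      qed
    qed
  qed
qed




theorem theorem2p15:
  fixes X :: "'a topology" and P :: "'a set set"
  assumes "t1_space X" and "closed_ideal X P"
  shows "(almost_PP X P \<longleftrightarrow> (\<forall>I. z_ideal (CP X P) I \<longrightarrow> z0_ideal (CP X P) I))
       \<and> (almost_PP X P \<longleftrightarrow> (\<forall>M. maximalideal M (CP X P) \<longrightarrow> z0_ideal (CP X P) M))
       \<and> (almost_PP X P \<longleftrightarrow> (\<forall>M. maximalideal M (CP X P) \<longrightarrow> M \<subseteq> zero_divisors (CP X P)))
       \<and> (almost_PP X P \<longleftrightarrow> (\<forall>I J. ideal I (CP X P) \<and> I \<subseteq> zero_divisors (CP X P)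
              \<and> ideal J (CP X P) \<and> J \<subseteq> zero_divisors (CP X P)
              \<longrightarrow> I <+>\<^bsub>CP X P\<^esub> J = carrier (CP X P) \<or> I <+>\<^bsub>CP X P\<^esub> J \<subseteq> zero_divisors (CP X P)))
       \<and> (almost_PP X P \<longleftrightarrow> (\<forall>f \<in> carrier (CP X P). f \<notin> Units (CP X P) \<longrightarrow>
              (\<exists>g \<in> carrier (CP X P). g \<noteq> \<zero>\<^bsub>CP X P\<^esub> \<and> Pset (CP X P) f \<subseteq> Ann (CP X P) g)))"
proof -
  have cP: "closed_ideal X P" by fact
  have A2: "almost_PP X P \<Longrightarrow> (\<forall>I. z_ideal (CP X P) I \<longrightarrow> z0_ideal (CP X P) I)"
    using E1[OF cP] by blast
  have B3: "(\<forall>I. z_ideal (CP X P) I \<longrightarrow> z0_ideal (CP X P) I) \<Longrightarrow> (\<forall>M. maximalideal M (CP X P) \<longrightarrow> z0_ideal (CP X P) M)"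
    using E2 by blast
  have C1: "(\<forall>M. maximalideal M (CP X P) \<longrightarrow> z0_ideal (CP X P) M) \<Longrightarrow> almost_PP X P"
    using E3[OF cP] by blast
  have i1: "almost_PP X P \<longleftrightarrow> (\<forall>I. z_ideal (CP X P) I \<longrightarrow> z0_ideal (CP X P) I)"
    using A2 B3 C1 by blast
  have i2: "almost_PP X P \<longleftrightarrow> (\<forall>M. maximalideal M (CP X P) \<longrightarrow> z0_ideal (CP X P) M)"
    using A2 B3 C1 by blast
  show ?thesis using i1 i2 E4[OF cP] E5[OF cP] E6[OF cP] by (intro conjI)
qed


end
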